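(* Let $M$ be a finitely generated $\mathbb{N}^n$-graded $S$-module generated in squarefree degrees, with minimal $\mathbb{N}^n$-graded free resolution $0\leftarrow M\leftarrow F_0\leftarrow F_1\leftarrow\cdots\leftarrow F_r\leftarrow0$. Then $F_1$ is generated in squarefree degrees if and only if $F_i$ is generated in squarefree degrees for all $i=0,\dots,r$.
   Context: $S=\mathbb{k}[x_1,\dots,x_n]$ with fine $\mathbb{N}^n$-grading. A degree in $\mathbb{N}^n$ is squarefree if all its entries lie in $\{0,1\}$; a graded module is generated in squarefree degrees if it has a homogeneous generating set all of whose degrees are squarefree. *)

theory Defs
  imports Main "HOL.Vector_Spaces" "HOL-Library.Function_Algebras"
begin

text \<open>Multidegrees in N^n are functions 'n => nat for a finite index type 'n
  (the variables x_j, j :: 'n).  The order on degrees is the pointwise order.\<close>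

definition squarefree_deg :: "('n \<Rightarrow> nat) \<Rightarrow> bool" where
  "squarefree_deg a \<longleftrightarrow> (\<forall>j. a j \<le> 1)"

text \<open>A fine N^n-graded S-module, S = k[x_j], over the field k, given by its graded
  components C a (k-subspaces of an ambient k-vector space; the module is their
  external direct sum) and the action of monomials: act c a is multiplication by x^c,
  a k-linear map C a -> C (a + c), with x^0 = id and x^c' x^c = x^(c+c').\<close>

definition graded_module ::
  "('k::field \<Rightarrow> 'v::ab_group_add \<Rightarrow> 'v) \<Rightarrow> (('n \<Rightarrow> nat) \<Rightarrow> 'v set)
    \<Rightarrow> (('n \<Rightarrow> nat) \<Rightarrow> ('n \<Rightarrow> nat) \<Rightarrow> 'v \<Rightarrow> 'v) \<Rightarrow> bool" where
  "graded_module scale C act \<longleftrightarrow>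
     vector_space scale \<and>
     (\<forall>a. module.subspace scale (C a)) \<and>
     (\<forall>c a x. x \<in> C a \<longrightarrow> act c a x \<in> C (\<lambda>j. a j + c j)) \<and>
     (\<forall>c a x y. x \<in> C a \<longrightarrow> y \<in> C a \<longrightarrow> act c a (x + y) = act c a x + act c a y) \<and>
     (\<forall>c a t x. x \<in> C a \<longrightarrow> act c a (scale t x) = scale t (act c a x)) \<and>
     (\<forall>a x. x \<in> C a \<longrightarrow> act (\<lambda>_. 0) a x = x) \<and>
     (\<forall>c c' a x. x \<in> C a \<longrightarrow>
        act c' (\<lambda>j. a j + c j) (act c a x) = act (\<lambda>j. c j + c' j) a x)"

definition generated_by ::
  "('k::field \<Rightarrow> 'v::ab_group_add \<Rightarrow> 'v) \<Rightarrow> (('n \<Rightarrow> nat) \<Rightarrow> 'v set)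
    \<Rightarrow> (('n \<Rightarrow> nat) \<Rightarrow> ('n \<Rightarrow> nat) \<Rightarrow> 'v \<Rightarrow> 'v) \<Rightarrow> (('n \<Rightarrow> nat) \<times> 'v) set \<Rightarrow> bool" where
  "generated_by scale C act G \<longleftrightarrow>
     (\<forall>(a, v) \<in> G. v \<in> C a) \<and>
     (\<forall>b. C b = module.span scale
              {act (\<lambda>j. b j - a j) a v | a v. (a, v) \<in> G \<and> a \<le> b})"

definition finitely_generated ::
  "('k::field \<Rightarrow> 'v::ab_group_add \<Rightarrow> 'v) \<Rightarrow> (('n \<Rightarrow> nat) \<Rightarrow> 'v set)
    \<Rightarrow> (('n \<Rightarrow> nat) \<Rightarrow> ('n \<Rightarrow> nat) \<Rightarrow> 'v \<Rightarrow> 'v) \<Rightarrow> bool" where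
  "finitely_generated scale C act \<longleftrightarrow> (\<exists>G. finite G \<and> generated_by scale C act G)"

definition gen_in_squarefree ::
  "('k::field \<Rightarrow> 'v::ab_group_add \<Rightarrow> 'v) \<Rightarrow> (('n \<Rightarrow> nat) \<Rightarrow> 'v set)
    \<Rightarrow> (('n \<Rightarrow> nat) \<Rightarrow> ('n \<Rightarrow> nat) \<Rightarrow> 'v \<Rightarrow> 'v) \<Rightarrow> bool" where
  "gen_in_squarefree scale C act \<longleftrightarrow>
     (\<exists>G. generated_by scale C act G \<and> (\<forall>(a, v) \<in> G. squarefree_deg a))"

text \<open>The graded free module F = (+)_{p < length D} S(-D!p) with basis e_p of degree D!p.
  Its degree-b component has k-basis x^(b - D!p) e_p (D!p <= b); we represent an element
  of it by its coefficient vector v :: nat => 'k (coefficient of x^(b - D!p) e_p at p).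
  In these coordinates multiplication by a monomial is the identity on coefficients.\<close>

definition free_scale :: "'k::field \<Rightarrow> (nat \<Rightarrow> 'k) \<Rightarrow> (nat \<Rightarrow> 'k)" where
  "free_scale t v = (\<lambda>p. t * v p)"

definition free_comp :: "('n \<Rightarrow> nat) list \<Rightarrow> ('n \<Rightarrow> nat) \<Rightarrow> (nat \<Rightarrow> 'k::field) set" where
  "free_comp D b = {v. \<forall>p. v p \<noteq> 0 \<longrightarrow> p < length D \<and> D ! p \<le> b}"

definition free_act :: "('n \<Rightarrow> nat) \<Rightarrow> ('n \<Rightarrow> nat) \<Rightarrow> (nat \<Rightarrow> 'k::field) \<Rightarrow> (nat \<Rightarrow> 'k)" where
  "free_act c a v = v"

text \<open>Differential d_i : F_i -> F_{i-1} given by e_p |-> sum_q c i p q * x^(D i!p - D (i-1)!q) e_q;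
  in the coordinates above it acts on every component by the scalar matrix c i.\<close>

definition dmap :: "(nat \<Rightarrow> ('n \<Rightarrow> nat) list) \<Rightarrow> (nat \<Rightarrow> nat \<Rightarrow> nat \<Rightarrow> 'k::field) \<Rightarrow> nat
    \<Rightarrow> (nat \<Rightarrow> 'k) \<Rightarrow> (nat \<Rightarrow> 'k)" where
  "dmap D c i v = (\<lambda>q. \<Sum>p<length (D i). c i p q * v p)"

definition aug :: "('k::field \<Rightarrow> 'v::ab_group_add \<Rightarrow> 'v)
    \<Rightarrow> (('n \<Rightarrow> nat) \<Rightarrow> ('n \<Rightarrow> nat) \<Rightarrow> 'v \<Rightarrow> 'v) \<Rightarrow> ('n \<Rightarrow> nat) list \<Rightarrow> (nat \<Rightarrow> 'v)
    \<Rightarrow> ('n \<Rightarrow> nat) \<Rightarrow> (nat \<Rightarrow> 'k) \<Rightarrow> 'v" where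
  "aug scale act D0 g b v =
     (\<Sum>p \<in> {p. p < length D0 \<and> D0 ! p \<le> b}.
        scale (v p) (act (\<lambda>j. b j - (D0 ! p) j) (D0 ! p) (g p)))"

text \<open>Minimal N^n-graded free resolution 0 <- M <- F_0 <- F_1 <- ... <- F_r <- 0 of M,
  where F_i has basis degrees D i (F_i = 0 for i > r), d_i has coefficient matrix c i,
  and the augmentation sends e_p to g p.  Exactness is checked degreewise;
  minimality means every d_i (i >= 1) has image in m F_{i-1}, i.e. no unit entries.\<close>

definition min_free_resolution ::
  "('k::field \<Rightarrow> 'v::ab_group_add \<Rightarrow> 'v) \<Rightarrow> (('n \<Rightarrow> nat) \<Rightarrow> 'v set)
    \<Rightarrow> (('n \<Rightarrow> nat) \<Rightarrow> ('n \<Rightarrow> nat) \<Rightarrow> 'v \<Rightarrow> 'v) \<Rightarrow> nat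
    \<Rightarrow> (nat \<Rightarrow> ('n \<Rightarrow> nat) list) \<Rightarrow> (nat \<Rightarrow> nat \<Rightarrow> nat \<Rightarrow> 'k) \<Rightarrow> (nat \<Rightarrow> 'v) \<Rightarrow> bool" where
  "min_free_resolution scale C act r D c g \<longleftrightarrow>
     (\<forall>i > r. D i = []) \<and>
     (\<forall>i p q. 1 \<le> i \<longrightarrow> c i p q \<noteq> 0 \<longrightarrow>
        p < length (D i) \<and> q < length (D (i - 1)) \<and> D (i - 1) ! q \<le> D i ! p) \<and>
     (\<forall>p < length (D 0). g p \<in> C (D 0 ! p)) \<and>
     (\<forall>b. aug scale act (D 0) g b ` free_comp (D 0) b = C b) \<and>
     (\<forall>b. {v \<in> free_comp (D 0) b. aug scale act (D 0) g b v = 0}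
          = dmap D c 1 ` free_comp (D 1) b) \<and>
     (\<forall>i b. 1 \<le> i \<longrightarrow> {v \<in> free_comp (D i) b. dmap D c i v = 0}
          = dmap D c (i + 1) ` free_comp (D (i + 1)) b) \<and>
     (\<forall>i p q. 1 \<le> i \<longrightarrow> p < length (D i) \<longrightarrow> q < length (D (i - 1)) \<longrightarrow>
        D i ! p = D (i - 1) ! q \<longrightarrow> c i p q = 0)"

end

theory Submission imports Defs begin

lemma free_vs: "vector_space (free_scale :: 'k::field \<Rightarrow> _)"
  by unfold_locales (auto simp: free_scale_def fun_eq_iff algebra_simps)

lemma free_module: "module (free_scale :: 'k::field \<Rightarrow> _)"
  using free_vs by (simp add: vector_space_def module_def)

definition ev :: "nat \<Rightarrow> nat \<Rightarrow> 'k::field" where "ev p = (\<lambda>q. if q = p then 1 else 0)"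

lemma free_comp_subspace: "module.subspace (free_scale :: 'k::field \<Rightarrow> _) (free_comp D b)"
  unfolding module.subspace_def[OF free_module]
  by (auto simp: free_comp_def free_scale_def) (metis add.left_neutral)+

lemma sum_fun_app: "(\<Sum>a\<in>A. f a) x = (\<Sum>a\<in>A. f a x)"
  by (induct A rule: infinite_finite_induct) auto

lemma free_comp_sum:
  assumes "v \<in> (free_comp D b :: (nat \<Rightarrow> 'k::field) set)"
  shows "v = (\<Sum>q\<in>{q. q < length D \<and> D ! q \<le> b}. free_scale (v q) (ev q))"
proof (rule ext)
  fix x
  have fin: "finite {q. q < length D \<and> D ! q \<le> b}" by simp
  have "(\<Sum>q\<in>{q. q < length D \<and> D ! q \<le> b}. free_scale (v q) (ev q)) x
      = (\<Sum>q\<in>{q. q < length D \<and> D ! q \<le> b}. v q * ev q x)"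
    by (simp add: sum_fun_app free_scale_def)
  also have "\<dots> = (\<Sum>q\<in>{q. q < length D \<and> D ! q \<le> b}. if q = x then v q else 0)"
    by (rule sum.cong) (auto simp: ev_def)
  also have "\<dots> = (if x < length D \<and> D ! x \<le> b then v x else 0)"
    by (simp add: fin sum.delta)
  also have "\<dots> = v x" using assms by (auto simp: free_comp_def)
  finally show "v x = (\<Sum>q\<in>{q. q < length D \<and> D ! q \<le> b}. free_scale (v q) (ev q)) x" by simp
qed

lemma gen_sq_free_iff:
  "gen_in_squarefree (free_scale :: 'k::field \<Rightarrow> _) (free_comp D) free_act
     \<longleftrightarrow> (\<forall>p<length D. squarefree_deg (D ! p))"
proof
  assume "gen_in_squarefree (free_scale :: 'k::field \<Rightarrow> _) (free_comp D) free_act"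
  then obtain G where G: "generated_by (free_scale :: 'k::field \<Rightarrow> _) (free_comp D) free_act G"
     and sq: "\<forall>(a, v) \<in> G. squarefree_deg a" by (auto simp: gen_in_squarefree_def)
  show "\<forall>p<length D. squarefree_deg (D ! p)"
  proof (intro allI impI)
    fix p assume p: "p < length D"
    let ?S = "{free_act (\<lambda>j. (D ! p) j - a j) a v | a v. (a, v) \<in> G \<and> a \<le> D ! p}"
    have "(ev p :: nat \<Rightarrow> 'k) \<in> free_comp D (D ! p)" using p by (auto simp: free_comp_def ev_def)
    hence span: "(ev p :: nat \<Rightarrow> 'k) \<in> module.span free_scale ?S" using G by (simp add: generated_by_def)
    show "squarefree_deg (D ! p)"
    proof (rule ccontr)
      assume ns: "\<not> squarefree_deg (D ! p)"
      have "?S \<subseteq> {f. f p = 0}"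
      proof
        fix f assume "f \<in> ?S"
        then obtain a where a: "(a, f) \<in> G" "a \<le> D ! p" by (auto simp: free_act_def)
        have "f \<in> free_comp D a" using a(1) G by (auto simp: generated_by_def)
        moreover have "a \<noteq> D ! p" using a(1) sq ns by auto
        ultimately show "f \<in> {f. f p = 0}" using a(2) by (auto simp: free_comp_def)
      qed
      moreover have "module.subspace (free_scale :: 'k::field \<Rightarrow> _) {f. f p = 0}"
        unfolding module.subspace_def[OF free_module] by (auto simp: free_scale_def)
      ultimately have "module.span free_scale ?S \<subseteq> {f :: nat \<Rightarrow> 'k. f p = 0}"
        by (rule module.span_minimal[OF free_module])
      with span show False by (auto simp: ev_def)
    qed
  qed
next
  assume sq: "\<forall>p<length D. squarefree_deg (D ! p)"
  define G where "G = {(D ! q, ev q :: nat \<Rightarrow> 'k) | q. q < length D}"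
  have "generated_by (free_scale :: 'k::field \<Rightarrow> _) (free_comp D) free_act G"
    unfolding generated_by_def
  proof (intro conjI allI)
    show "\<forall>(a, v)\<in>G. v \<in> free_comp D a" by (auto simp: G_def free_comp_def ev_def split: if_splits)
    fix b
    let ?S = "{free_act (\<lambda>j. b j - a j) a v | a v. (a, v) \<in> G \<and> a \<le> b}"
    have S: "?S = {ev q | q. q < length D \<and> D ! q \<le> b}"
      by (auto simp: G_def free_act_def)
    show "free_comp D b = module.span free_scale ?S"
    proof
      show "free_comp D b \<subseteq> module.span free_scale ?S"
      proof
        fix v :: "nat \<Rightarrow> 'k" assume v: "v \<in> free_comp D b"
        show "v \<in> module.span free_scale ?S"
          apply (subst free_comp_sum[OF v])
          apply (rule module.span_sum[OF free_module])
          apply (rule module.span_scale[OF free_module])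
          apply (rule module.span_base[OF free_module])
          unfolding S by auto
      qed
      show "module.span free_scale ?S \<subseteq> free_comp D b"
        apply (rule module.span_minimal[OF free_module])
        unfolding S using free_comp_subspace
        by (auto simp: free_comp_def ev_def split: if_splits)
    qed
  qed
  thus "gen_in_squarefree (free_scale :: 'k::field \<Rightarrow> _) (free_comp D) free_act"
    using sq by (auto simp: gen_in_squarefree_def G_def)
qed

lemma min_contra:
  assumes R: "min_free_resolution scale C act r D c g"
    and p: "p < length (D k)"
    and u: "u \<in> free_comp (D (Suc k)) (D k ! p)"
    and nz: "dmap D c (Suc k) u p \<noteq> 0"
  shows False
proof -
  have "dmap D c (Suc k) u p = (\<Sum>s<length (D (Suc k)). c (Suc k) s p * u s)"
    by (simp add: dmap_def)
  also have "\<dots> = 0"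
  proof (rule sum.neutral, rule ballI)
    fix s assume s: "s \<in> {..<length (D (Suc k))}"
    show "c (Suc k) s p * u s = 0"
    proof (rule ccontr)
      assume "c (Suc k) s p * u s \<noteq> 0"
      hence c0: "c (Suc k) s p \<noteq> 0" and u0: "u s \<noteq> 0" by auto
      from R c0 have le1: "D k ! p \<le> D (Suc k) ! s"
        unfolding min_free_resolution_def by (metis diff_Suc_1 le_add1 plus_1_eq_Suc)
      from u u0 have le2: "D (Suc k) ! s \<le> D k ! p" by (auto simp: free_comp_def)
      from le1 le2 have "D (Suc k) ! s = D (Suc k - 1) ! p" by simp
      with R s p have "c (Suc k) s p = 0"
        unfolding min_free_resolution_def by (metis diff_Suc_1 lessThan_iff le_add1 plus_1_eq_Suc)
      with c0 show False by simp
    qed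
  qed
  finally show False using nz by simp
qed

lemma dmap_diff: "dmap D c i (v - w) = dmap D c i v - dmap D c i w"
  by (simp add: dmap_def fun_eq_iff right_diff_distrib sum_subtractf)

lemma dmap_ev: "dmap D c i (ev p) = (\<lambda>q. if p < length (D i) then c i p q else 0)"
proof (rule ext)
  fix q
  have "dmap D c i (ev p) q = (\<Sum>s<length (D i). if s = p then c i s q else 0)"
    unfolding dmap_def by (rule sum.cong) (auto simp: ev_def)
  thus "dmap D c i (ev p) q = (if p < length (D i) then c i p q else 0)"
    by (simp add: sum.delta)
qed

lemma nonsq_dec:
  assumes "\<not> squarefree_deg (d :: 'n \<Rightarrow> nat)"
  obtains d' where "d' \<le> d" "\<not> d \<le> d'" "\<And>a. squarefree_deg a \<Longrightarrow> a \<le> d \<Longrightarrow> a \<le> d'"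
    "\<exists>j. d = (\<lambda>k. d' k + (if k = j then 1 else 0)) \<and> 1 \<le> d' j"
proof -
  from assms obtain j where "\<not> d j \<le> 1" by (auto simp: squarefree_deg_def)
  hence j: "d j \<ge> 2" by simp
  define d' where "d' = (\<lambda>k. if k = j then d k - 1 else d k)"
  have "d' \<le> d" by (auto simp: d'_def le_fun_def)
  moreover have "\<not> d \<le> d'" using j by (auto simp: d'_def le_fun_def intro!: exI[of _ j])
  moreover have "a \<le> d'" if "squarefree_deg a" "a \<le> d" for a
  proof -
    have "a k \<le> d' k" for k
    proof (cases "k = j")
      case True
      have "a j \<le> 1" using that(1) by (simp add: squarefree_deg_def)
      thus ?thesis using True j by (simp add: d'_def)
    next
      case False
      thus ?thesis using that(2) by (simp add: d'_def le_fun_def)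
    qed
    thus ?thesis by (simp add: le_fun_def)
  qed
  moreover have "d = (\<lambda>k. d' k + (if k = j then 1 else 0)) \<and> 1 \<le> d' j"
    using j by (auto simp: d'_def fun_eq_iff)
  ultimately show ?thesis using that by blast
qed

lemma res_step:
  fixes c :: "nat \<Rightarrow> nat \<Rightarrow> nat \<Rightarrow> 'k::field"
  assumes R: "min_free_resolution scale C act r D c g"
    and i: "1 \<le> i"
    and sqi: "\<forall>p<length (D i). squarefree_deg (D i ! p)"
  shows "\<forall>p<length (D (Suc i)). squarefree_deg (D (Suc i) ! p)"
proof (intro allI impI, rule ccontr)
  fix p assume p: "p < length (D (Suc i))" and ns: "\<not> squarefree_deg (D (Suc i) ! p)"
  define d where "d = D (Suc i) ! p"
  obtain d' where d': "d' \<le> d" "\<not> d \<le> d'" "\<And>a. squarefree_deg a \<Longrightarrow> a \<le> d \<Longrightarrow> a \<le> d'"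
    using nonsq_dec[OF ns[folded d_def]] by blast
  have ex: "\<And>i b. 1 \<le> i \<Longrightarrow> {v \<in> free_comp (D i) b. dmap D c i v = 0}
          = dmap D c (i + 1) ` free_comp (D (i + 1)) b"
    using R unfolding min_free_resolution_def by blast
  have ep: "(ev p :: nat \<Rightarrow> 'k) \<in> free_comp (D (Suc i)) d" using p by (auto simp: free_comp_def ev_def d_def split: if_splits)
  define v where "v = dmap D c (Suc i) (ev p)"
  have v_d: "v \<in> {x \<in> free_comp (D i) d. dmap D c i x = 0}"
    using ex[OF i, of d] ep unfolding v_def by auto
  have v_d': "v \<in> free_comp (D i) d'"
  proof -
    have "\<And>q. v q \<noteq> 0 \<Longrightarrow> q < length (D i) \<and> D i ! q \<le> d'"
      using v_d sqi d'(3) by (auto simp: free_comp_def)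
    thus ?thesis by (simp add: free_comp_def)
  qed
  hence "v \<in> {x \<in> free_comp (D i) d'. dmap D c i x = 0}" using v_d by simp
  then obtain w where w: "w \<in> free_comp (D (Suc i)) d'" "v = dmap D c (Suc i) w"
    using ex[OF i, of d'] by auto
  have wd: "w \<in> free_comp (D (Suc i)) d" using w(1) d'(1) by (auto simp: free_comp_def intro: order_trans)
  have wp: "w p = 0" using w(1) d'(2) by (auto simp: free_comp_def d_def)
  have diff: "(ev p :: nat \<Rightarrow> 'k) - w \<in> free_comp (D (Suc i)) d"
  proof -
    have "\<And>q. (ev p - w) q \<noteq> 0 \<Longrightarrow> q < length (D (Suc i)) \<and> D (Suc i) ! q \<le> d"
    proof -
      fix q assume "((ev p :: nat \<Rightarrow> 'k) - w) q \<noteq> 0"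
      hence "(ev p q :: 'k) \<noteq> 0 \<or> w q \<noteq> 0" by auto
      thus "q < length (D (Suc i)) \<and> D (Suc i) ! q \<le> d" using ep wd by (auto simp: free_comp_def)
    qed
    thus ?thesis by (simp add: free_comp_def)
  qed
  have "dmap D c (Suc i) (ev p - w) = 0" using w(2) by (simp add: dmap_diff v_def)
  hence "ev p - w \<in> dmap D c (Suc i + 1) ` free_comp (D (Suc i + 1)) d"
    using ex[of "Suc i" d] diff by auto
  then obtain u where u: "u \<in> free_comp (D (Suc (Suc i))) d" "ev p - w = dmap D c (Suc (Suc i)) u"
    by auto
  have "dmap D c (Suc (Suc i)) u p \<noteq> 0" using u(2)[symmetric] wp
    by (simp add: ev_def fun_eq_iff)
  thus False using min_contra[OF R p, of u] u(1) by (simp add: d_def)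
qed

lemma gm_module: "graded_module scale C act \<Longrightarrow> module scale"
  by (simp add: graded_module_def vector_space_def module_def)

lemma scale_sum_r:
  assumes "module scale"
  shows "scale t (sum f A) = (\<Sum>x\<in>A. scale t (f x))"
  by (induct A rule: infinite_finite_induct)
     (simp_all add: module.scale_zero_right[OF assms] module.scale_right_distrib[OF assms])

lemma aug_add:
  assumes "module scale"
  shows "aug scale act D0 g b (v + w) = aug scale act D0 g b v + aug scale act D0 g b w"
  unfolding aug_def by (simp add: module.scale_left_distrib[OF assms] sum.distrib)

lemma aug_diff:
  assumes "module scale"
  shows "aug scale act D0 g b (v - w) = aug scale act D0 g b v - aug scale act D0 g b w"
  unfolding aug_def by (simp add: module.scale_left_diff_distrib[OF assms] sum_subtractf)

lemma aug_scale:
  assumes "module scale"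
  shows "aug scale act D0 g b (free_scale t v) = scale t (aug scale act D0 g b v)"
  unfolding aug_def by (simp add: free_scale_def scale_sum_r[OF assms] module.scale_scale[OF assms])

lemma act_zero:
  assumes GM: "graded_module scale C act"
  shows "act c a 0 = 0"
proof -
  have z: "0 \<in> C a" using GM module.subspace_0[OF gm_module[OF GM]]
    by (auto simp: graded_module_def)
  have add: "\<forall>x y. x \<in> C a \<longrightarrow> y \<in> C a \<longrightarrow> act c a (x + y) = act c a x + act c a y"
    using GM by (simp add: graded_module_def)
  from add z have "act c a (0 + 0) = act c a 0 + act c a 0" by blast
  thus ?thesis by simp
qed

lemma act_sum:
  assumes GM: "graded_module scale C act"
  shows "(\<And>x. x \<in> A \<Longrightarrow> f x \<in> C a) \<Longrightarrow> act c a (sum f A) = (\<Sum>x\<in>A. act c a (f x))"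
proof (induct A rule: infinite_finite_induct)
  case (infinite A) thus ?case by (simp add: act_zero[OF GM])
next
  case empty thus ?case by (simp add: act_zero[OF GM])
next
  case (insert x F)
  have sub: "module.subspace scale (C a)" using GM by (simp add: graded_module_def)
  have "sum f F \<in> C a" using insert by (intro module.subspace_sum[OF gm_module[OF GM] sub]) auto
  moreover have "f x \<in> C a" using insert by auto
  ultimately show ?case using insert GM by (simp add: graded_module_def)
qed

lemma aug_transport:
  assumes GM: "graded_module scale C act"
    and gC: "\<forall>p < length D0. g p \<in> C (D0 ! p)"
    and bb: "b \<le> b'"
    and w: "w \<in> free_comp D0 b"
  shows "act (\<lambda>j. b' j - b j) b (aug scale act D0 g b w) = aug scale act D0 g b' w"
proof -
  have M: "module scale" by (rule gm_module[OF GM])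
  have sub: "module.subspace scale (C b)" using GM by (simp add: graded_module_def)
  let ?P = "\<lambda>b. {p. p < length D0 \<and> D0 ! p \<le> b}"
  let ?t = "\<lambda>b p. scale (w p) (act (\<lambda>j. b j - (D0 ! p) j) (D0 ! p) (g p))"
  have inC: "act (\<lambda>j. b j - (D0 ! p) j) (D0 ! p) (g p) \<in> C b" if "p \<in> ?P b" for p
  proof -
    have "act (\<lambda>j. b j - (D0 ! p) j) (D0 ! p) (g p) \<in> C (\<lambda>j. (D0 ! p) j + (b j - (D0 ! p) j))"
      using GM gC that by (simp add: graded_module_def)
    moreover have "(\<lambda>j. (D0 ! p) j + (b j - (D0 ! p) j)) = b" using that by (auto simp: le_fun_def fun_eq_iff)
    ultimately show ?thesis by simp
  qed
  have "act (\<lambda>j. b' j - b j) b (aug scale act D0 g b w) = (\<Sum>p\<in>?P b. act (\<lambda>j. b' j - b j) b (?t b p))"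
    unfolding aug_def
    by (rule act_sum[OF GM]) (use inC module.subspace_scale[OF M sub] in blast)
  also have "\<dots> = (\<Sum>p\<in>?P b. ?t b' p)"
  proof (rule sum.cong[OF refl])
    fix p assume p: "p \<in> ?P b"
    have "act (\<lambda>j. b' j - b j) b (?t b p) = scale (w p) (act (\<lambda>j. b' j - b j) b (act (\<lambda>j. b j - (D0 ! p) j) (D0 ! p) (g p)))"
      using GM inC[OF p] by (simp add: graded_module_def)
    also have "act (\<lambda>j. b' j - b j) b (act (\<lambda>j. b j - (D0 ! p) j) (D0 ! p) (g p))
        = act (\<lambda>j. b' j - b j) (\<lambda>j. (D0 ! p) j + (b j - (D0 ! p) j)) (act (\<lambda>j. b j - (D0 ! p) j) (D0 ! p) (g p))"
      using p by (auto simp: le_fun_def intro!: arg_cong2[where f="\<lambda>x y. act x y _"])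
    also have "\<dots> = act (\<lambda>j. (b j - (D0 ! p) j) + (b' j - b j)) (D0 ! p) (g p)"
      using GM gC p by (simp add: graded_module_def)
    also have "(\<lambda>j. (b j - (D0 ! p) j) + (b' j - b j)) = (\<lambda>j. b' j - (D0 ! p) j)"
      using p bb by (auto simp: le_fun_def fun_eq_iff)
    finally show "act (\<lambda>j. b' j - b j) b (?t b p) = ?t b' p" .
  qed
  also have "\<dots> = (\<Sum>p\<in>?P b'. ?t b' p)"
  proof (rule sum.mono_neutral_left)
    show "finite (?P b')" by simp
    show "?P b \<subseteq> ?P b'" using bb by (auto intro: order_trans)
    show "\<forall>p\<in>?P b' - ?P b. ?t b' p = 0"
      using w by (auto simp: free_comp_def) (metis module.scale_zero_left[OF M])
  qed
  finally show ?thesis unfolding aug_def .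
qed

lemma res_F0:
  fixes scale :: "'k::field \<Rightarrow> 'm::ab_group_add \<Rightarrow> 'm"
    and C :: "('n \<Rightarrow> nat) \<Rightarrow> 'm set"
    and c :: "nat \<Rightarrow> nat \<Rightarrow> nat \<Rightarrow> 'k"
  assumes GM: "graded_module scale C act"
    and SQ: "gen_in_squarefree scale C act"
    and R: "min_free_resolution scale C act r D c g"
  shows "\<forall>p<length (D 0). squarefree_deg (D 0 ! p)"
proof (intro allI impI, rule ccontr)
  have M: "module scale" by (rule gm_module[OF GM])
  fix p assume p: "p < length (D 0)" and ns: "\<not> squarefree_deg (D 0 ! p)"
  define d where "d = D 0 ! p"
  obtain d' where d': "d' \<le> d" "\<not> d \<le> d'" "\<And>a. squarefree_deg a \<Longrightarrow> a \<le> d \<Longrightarrow> a \<le> d'"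
    using nonsq_dec[OF ns[folded d_def]] by blast
  obtain G where G: "generated_by scale C act G" and Gsq: "\<forall>(a, v) \<in> G. squarefree_deg a"
    using SQ by (auto simp: gen_in_squarefree_def)
  have gC: "\<forall>p < length (D 0). g p \<in> C (D 0 ! p)" using R by (simp add: min_free_resolution_def)
  have augC: "\<And>b. aug scale act (D 0) g b ` free_comp (D 0) b = C b"
    using R by (simp add: min_free_resolution_def)
  have ker: "{v \<in> free_comp (D 0) d. aug scale act (D 0) g d v = 0} = dmap D c 1 ` free_comp (D 1) d"
    using R by (simp add: min_free_resolution_def)
  define W where "W = (free_comp (D 0) d' :: (nat \<Rightarrow> 'k) set)"
  define T where "T = aug scale act (D 0) g d ` W"
  have Wsub: "module.subspace free_scale W" unfolding W_def by (rule free_comp_subspace)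
  have Tsub: "module.subspace scale T"
  proof (rule module.subspaceI[OF M])
    have "0 \<in> W" by (rule module.subspace_0[OF free_module Wsub])
    moreover have "aug scale act (D 0) g d 0 = 0" by (simp add: aug_def module.scale_zero_left[OF M])
    ultimately show "0 \<in> T" unfolding T_def by (metis image_eqI)
  next
    fix x y assume "x \<in> T" "y \<in> T"
    then obtain v w where "v \<in> W" "w \<in> W" "x = aug scale act (D 0) g d v" "y = aug scale act (D 0) g d w"
      unfolding T_def by auto
    thus "x + y \<in> T" unfolding T_def
      by (metis aug_add[OF M] image_eqI module.subspace_add[OF free_module Wsub])
  next
    fix t x assume "x \<in> T"
    then obtain v where "v \<in> W" "x = aug scale act (D 0) g d v" unfolding T_def by auto
    thus "scale t x \<in> T" unfolding T_def
      by (metis aug_scale[OF M] image_eqI module.subspace_scale[OF free_module Wsub])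
  qed
  have gens: "{act (\<lambda>j. d j - a j) a v | a v. (a, v) \<in> G \<and> a \<le> d} \<subseteq> T"
  proof
    fix x assume "x \<in> {act (\<lambda>j. d j - a j) a v | a v. (a, v) \<in> G \<and> a \<le> d}"
    then obtain a v where av: "(a, v) \<in> G" "a \<le> d" "x = act (\<lambda>j. d j - a j) a v" by auto
    have ad': "a \<le> d'" using d'(3) av Gsq by auto
    have vC: "v \<in> C a" using G av(1) by (auto simp: generated_by_def)
    define y where "y = act (\<lambda>j. d' j - a j) a v"
    have "y \<in> C (\<lambda>j. a j + (d' j - a j))" unfolding y_def using GM vC by (simp add: graded_module_def)
    moreover have "(\<lambda>j. a j + (d' j - a j)) = d'" using ad' by (auto simp: le_fun_def fun_eq_iff)
    ultimately have yC: "y \<in> C d'" by simp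
    then obtain w where w: "w \<in> W" "y = aug scale act (D 0) g d' w" using augC[of d'] unfolding W_def by auto
    have "act (\<lambda>j. d j - d' j) d' y = aug scale act (D 0) g d w"
      using aug_transport[OF GM gC d'(1), of w] w unfolding W_def by simp
    moreover have "act (\<lambda>j. d j - d' j) d' y = x"
    proof -
      have "act (\<lambda>j. d j - d' j) d' y = act (\<lambda>j. d j - d' j) (\<lambda>j. a j + (d' j - a j)) y"
        using \<open>(\<lambda>j. a j + (d' j - a j)) = d'\<close> by simp
      also have "\<dots> = act (\<lambda>j. (d' j - a j) + (d j - d' j)) a v"
        unfolding y_def using GM vC by (simp add: graded_module_def)
      also have "(\<lambda>j. (d' j - a j) + (d j - d' j)) = (\<lambda>j. d j - a j)"
        using ad' d'(1) by (auto simp: le_fun_def fun_eq_iff)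
      finally show ?thesis using av(3) by simp
    qed
    ultimately show "x \<in> T" unfolding T_def using w(1) by auto
  qed
  have "C d \<subseteq> T"
    using G module.span_minimal[OF M gens Tsub] by (simp add: generated_by_def)
  moreover have gpC: "g p \<in> C d" using gC p by (simp add: d_def)
  ultimately obtain w where w: "w \<in> W" "g p = aug scale act (D 0) g d w" unfolding T_def by auto
  have ep: "(ev p :: nat \<Rightarrow> 'k) \<in> free_comp (D 0) d" using p by (auto simp: free_comp_def ev_def d_def split: if_splits)
  have aug_ep: "aug scale act (D 0) g d (ev p) = g p"
  proof -
    have "aug scale act (D 0) g d (ev p) = (\<Sum>q\<in>{q. q < length (D 0) \<and> D 0 ! q \<le> d}.
        if q = p then act (\<lambda>j. d j - (D 0 ! q) j) (D 0 ! q) (g q) else 0)"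
      unfolding aug_def by (rule sum.cong) (auto simp: ev_def module.scale_zero_left[OF M] module.scale_one[OF M])
    also have "\<dots> = act (\<lambda>j. d j - (D 0 ! p) j) (D 0 ! p) (g p)" using p by (simp add: sum.delta d_def)
    also have "(\<lambda>j. d j - (D 0 ! p) j) = (\<lambda>_. 0)" by (simp add: d_def)
    finally show ?thesis using GM gC p by (simp add: graded_module_def)
  qed
  have wd: "w \<in> free_comp (D 0) d" using w(1) d'(1) by (auto simp: W_def free_comp_def intro: order_trans)
  have wp: "w p = 0" using w(1) d'(2) by (auto simp: W_def free_comp_def d_def)
  have diff: "(ev p :: nat \<Rightarrow> 'k) - w \<in> free_comp (D 0) d"
    by (rule module.subspace_diff[OF free_module free_comp_subspace ep wd])
  have "aug scale act (D 0) g d (ev p - w) = 0" using aug_ep w(2) by (simp add: aug_diff[OF M])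
  hence "ev p - w \<in> dmap D c 1 ` free_comp (D 1) d" using ker diff by blast
  then obtain u where u: "u \<in> free_comp (D (Suc 0)) d" "ev p - w = dmap D c (Suc 0) u" by auto
  have "dmap D c (Suc 0) u p \<noteq> 0" using u(2)[symmetric] wp by (simp add: ev_def fun_eq_iff)
  thus False using min_contra[OF R p, of u] u(1) by (simp add: d_def)
qed

theorem proposition3p6:
  fixes scale :: "'k::field \<Rightarrow> 'm::ab_group_add \<Rightarrow> 'm"
    and C :: "('n::finite \<Rightarrow> nat) \<Rightarrow> 'm set"
    and act :: "('n \<Rightarrow> nat) \<Rightarrow> ('n \<Rightarrow> nat) \<Rightarrow> 'm \<Rightarrow> 'm"
    and r :: nat
    and D :: "nat \<Rightarrow> ('n \<Rightarrow> nat) list"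
    and c :: "nat \<Rightarrow> nat \<Rightarrow> nat \<Rightarrow> 'k"
    and g :: "nat \<Rightarrow> 'm"
  assumes "graded_module scale C act"
    and "finitely_generated scale C act"
    and "gen_in_squarefree scale C act"
    and "min_free_resolution scale C act r D c g"
  shows "gen_in_squarefree (free_scale :: 'k \<Rightarrow> _) (free_comp (D 1)) free_act \<longleftrightarrow>
         (\<forall>i \<le> r. gen_in_squarefree (free_scale :: 'k \<Rightarrow> _) (free_comp (D i)) free_act)"
proof
  assume "gen_in_squarefree (free_scale :: 'k \<Rightarrow> _) (free_comp (D 1)) free_act"
  hence F1: "\<forall>p<length (D 1). squarefree_deg (D 1 ! p)" by (simp add: gen_sq_free_iff)
  have F0: "\<forall>p<length (D 0). squarefree_deg (D 0 ! p)" by (rule res_F0[OF assms(1,3,4)])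
  have all: "\<forall>p<length (D i). squarefree_deg (D i ! p)" for i
  proof (cases i)
    case 0 thus ?thesis using F0 by simp
  next
    case (Suc k)
    have "\<forall>p<length (D (Suc k)). squarefree_deg (D (Suc k) ! p)"
    proof (induct k)
      case 0 thus ?case using F1 by simp
    next
      case (Suc k) thus ?case using res_step[OF assms(4)] by simp
    qed
    thus ?thesis using Suc by simp
  qed
  show "\<forall>i \<le> r. gen_in_squarefree (free_scale :: 'k \<Rightarrow> _) (free_comp (D i)) free_act"
    using all by (simp add: gen_sq_free_iff)
next
  assume H: "\<forall>i \<le> r. gen_in_squarefree (free_scale :: 'k \<Rightarrow> _) (free_comp (D i)) free_act"
  show "gen_in_squarefree (free_scale :: 'k \<Rightarrow> _) (free_comp (D 1)) free_act"
  proof (cases "1 \<le> r")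
    case True thus ?thesis using H by blast
  next
    case False
    hence "D 1 = []" using assms(4) by (simp add: min_free_resolution_def)
    thus ?thesis by (simp add: gen_sq_free_iff)
  qed
qed

end
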